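(* Given $t\ge0$, define \[ \varphi(u)=2\sqrt{\frac{u+1}{3}}\cos\Big[\tfrac13\arccos\Big(-t\Big(\frac{u+1}{3}\Big)^{-3/2}\Big)\Big] \] for $u\ge 3t^{2/3}-1$. Then: (i) $\varphi(u)$ and $\varphi^2(u)$ are strictly increasing on $[3t^{2/3}-1,\infty)$; (ii) if $0\le t\le1$, then $\varphi(2t)=1$; (iii) if $0\le t<1$, then $\varphi^2(u)$ is Lipschitz continuous on $[2t,\infty)$. *)

theory Defs
  imports "HOL-Analysis.Analysis"
begin

definition phi :: "real \<Rightarrow> real \<Rightarrow> real" where
  "phi t u = 2 * sqrt ((u + 1) / 3) *
     cos (arccos (- t * ((u + 1) / 3) powr (-3/2)) / 3)"

end

theory Submission
  imports Defs
begin

lemma pw: "(a::real) \<ge> 0 \<Longrightarrow> a powr (-3/2) = 1 / (sqrt a)^3"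
proof -
  assume le: "a \<ge> 0"
  have "a powr (3/2) = a powr (1 + 1/2)" by simp
  also have "\<dots> = a powr 1 * a powr (1/2)" by (rule powr_add)
  also have "\<dots> = a * sqrt a" by (simp only: powr_one[OF le] powr_half_sqrt[OF le])
  also have "\<dots> = (sqrt a)^3"
  proof -
    have "(sqrt a)^2 = a" by (rule real_sqrt_pow2[OF le])
    hence "(sqrt a)^3 = a * sqrt a" by (metis power3_eq_cube power2_eq_square)
    thus ?thesis by simp
  qed
  finally have h: "a powr (3/2) = (sqrt a)^3" .
  have m: "(-3/2::real) = - (3/2)" by simp
  have "a powr (-3/2) = inverse (a powr (3/2))"
    unfolding m by (rule powr_minus)
  thus ?thesis unfolding h by (simp only: divide_inverse mult_1)
qed

lemma phi_alt: "u \<ge> -1 \<Longrightarrow> phi t u = 2 * sqrt ((u+1)/3) * cos (arccos (- t / (sqrt ((u+1)/3))^3) / 3)"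
proof -
  assume "u \<ge> -1"
  hence "(u+1)/3 \<ge> 0" by simp
  from pw[OF this] have "- t * ((u+1)/3) powr (-3/2) = - t / (sqrt ((u+1)/3))^3" by simp
  thus ?thesis unfolding phi_def by simp
qed

lemma c_ge: "-1 \<le> y \<Longrightarrow> y \<le> 1 \<Longrightarrow> cos (arccos y / 3) \<ge> 1/2"
proof -
  assume h: "-1 \<le> y" "y \<le> 1"
  have "0 \<le> arccos y" "arccos y \<le> pi" using arccos_bounded[OF h] by auto
  hence "cos (pi/3) \<le> cos (arccos y / 3)"
    by (subst cos_mono_le_eq) (auto simp: pi_ge_zero)
  thus ?thesis by (simp add: cos_60)
qed

lemma cubic:
  fixes t u :: real
  defines "s \<equiv> sqrt ((u+1)/3)"
  assumes t: "t \<ge> 0" and s: "s > 0" and ts: "t \<le> s^3"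
  shows "(phi t u)^3 - (u+1) * phi t u + 2*t = 0 \<and> phi t u \<ge> s"
proof -
  have a: "(u+1)/3 > 0" using s unfolding s_def by simp
  hence u: "u \<ge> -1" by simp
  have ss: "s^2 = (u+1)/3" unfolding s_def using a by simp
  define y where "y = - t / s^3"
  have s3: "s^3 > 0" using s by simp
  have "t / s^3 \<le> 1" using ts s3 by (simp add: divide_le_eq)
  moreover have "0 \<le> t / s^3" using t s3 by simp
  ultimately have y1: "-1 \<le> y" and y2: "y \<le> 1" unfolding y_def by simp_all
  define c where "c = cos (arccos y / 3)"
  have ph: "phi t u = 2 * s * c" using phi_alt[OF u] unfolding c_def y_def s_def by simp
  have cge: "c \<ge> 1/2" using c_ge[OF y1 y2] unfolding c_def .
  have "cos (3 * (arccos y / 3)) = 4 * c^3 - 3 * c" unfolding c_def by (rule cos_treble_cos)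
  hence "y = 4 * c^3 - 3 * c" using y1 y2 by simp
  hence "y * s^3 = (4 * c^3 - 3*c) * s^3" by simp
  hence e: "- t = (4 * c^3 - 3*c) * s^3" using s3 unfolding y_def by simp
  have u1: "u + 1 = 3 * s^2" using ss by simp
  have "(2 * s * c)^3 - (u+1) * (2 * s * c) + 2*t = 2 * ((4 * c^3 - 3*c) * s^3) + 2*t"
    unfolding u1 by algebra
  hence "(2 * s * c)^3 - (u+1) * (2 * s * c) + 2*t = 0" using e by simp
  moreover have "2 * s * c \<ge> s" using cge s by (simp add: mult.commute)
  ultimately show ?thesis using ph by simp
qed

lemma yrange:
  fixes t s :: real
  assumes "t \<ge> 0" "s \<ge> 0" "t \<le> s^3"
  shows "-1 \<le> - t / s^3 \<and> - t / s^3 \<le> 1"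
proof (cases "s = 0")
  case True thus ?thesis by simp
next
  case False
  hence s3: "s^3 > 0" using assms by simp
  have "t / s^3 \<le> 1" using assms s3 by (simp add: divide_le_eq)
  moreover have "0 \<le> t / s^3" using assms s3 by simp
  ultimately show ?thesis by simp
qed

lemma dom:
  fixes t u :: real
  assumes t: "t \<ge> 0" and u: "u \<ge> 3 * t powr (2/3) - 1"
  shows "t \<le> (sqrt ((u+1)/3))^3"
proof (cases "t = 0")
  case True
  have "(u+1)/3 \<ge> 0" using u True by simp
  thus ?thesis using True by simp
next
  case False
  have a: "(u+1)/3 \<ge> t powr (2/3)" using u by simp
  have "t powr (1/3) = sqrt (t powr (2/3))"
    using powr_half_sqrt_powr[of t "2/3"] t by simp
  also have "\<dots> \<le> sqrt ((u+1)/3)" using a by simp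
  finally have "t powr (1/3) \<le> sqrt ((u+1)/3)" .
  hence "(t powr (1/3))^3 \<le> (sqrt ((u+1)/3))^3" by (rule power_mono) simp
  moreover have "(t powr (1/3))^3 = t" using powr_power[of t "1/3" 3] False t by simp
  ultimately show ?thesis by simp
qed

lemma mono_step:
  fixes t u v :: real
  assumes t: "t \<ge> 0" and u: "u \<ge> 3 * t powr (2/3) - 1" and uv: "u < v"
  shows "0 \<le> phi t u \<and> phi t u < phi t v"
proof -
  have v: "v \<ge> 3 * t powr (2/3) - 1" using u uv by simp
  have tp: "t powr (2/3) \<ge> 0" by simp
  have u1: "u \<ge> -1" using u tp by linarith
  have v1: "v \<ge> -1" using v tp by linarith
  define su where "su = sqrt ((u+1)/3)"
  define sv where "sv = sqrt ((v+1)/3)"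
  have su0: "su \<ge> 0" unfolding su_def using u1 by simp
  have suv: "su < sv" unfolding su_def sv_def using uv by simp
  have tu: "t \<le> su^3" unfolding su_def by (rule dom[OF t u])
  have tv: "t \<le> sv^3" unfolding sv_def by (rule dom[OF t v])
  define yu where "yu = - t / su^3"
  define yv where "yv = - t / sv^3"
  have ryu: "-1 \<le> yu" "yu \<le> 1" using yrange[OF t su0 tu] unfolding yu_def by auto
  have ryv: "-1 \<le> yv" "yv \<le> 1" using yrange[OF t _ tv] su0 suv unfolding yv_def by auto
  have yuv: "yu \<le> yv"
  proof (cases "su = 0")
    case True
    hence "t = 0" using tu t by simp
    thus ?thesis unfolding yu_def yv_def by simp
  next
    case False
    hence "su^3 > 0" using su0 by simp
    moreover have "su^3 < sv^3" using suv su0 by (rule power_strict_mono) simp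
    ultimately have "t / sv^3 \<le> t / su^3" using t suv
      by (intro divide_left_mono) (auto intro!: mult_pos_pos)
    thus ?thesis unfolding yu_def yv_def by simp
  qed
  define cu where "cu = cos (arccos yu / 3)"
  define cv where "cv = cos (arccos yv / 3)"
  have ar: "arccos yv \<le> arccos yu" by (rule arccos_le_arccos) (use ryu ryv yuv in auto)
  have bu: "0 \<le> arccos yu" "arccos yu \<le> pi" using arccos_bounded[OF ryu] by auto
  have bv: "0 \<le> arccos yv" "arccos yv \<le> pi" using arccos_bounded[OF ryv] by auto
  have cuv: "cu \<le> cv" unfolding cu_def cv_def
    by (subst cos_mono_le_eq) (use ar bu bv pi_ge_zero in auto)
  have cu0: "cu \<ge> 1/2" unfolding cu_def by (rule c_ge[OF ryu])
  have pu: "phi t u = 2 * su * cu" using phi_alt[OF u1] unfolding su_def cu_def yu_def by simp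
  have pv: "phi t v = 2 * sv * cv" using phi_alt[OF v1] unfolding sv_def cv_def yv_def by simp
  have "2 * su * cu \<le> 2 * su * cv" using cuv su0 by (simp add: mult_left_mono)
  also have "\<dots> < 2 * sv * cv" using suv cu0 cuv by simp
  finally have "phi t u < phi t v" using pu pv by simp
  moreover have "0 \<le> phi t u" using pu su0 cu0 by simp
  ultimately show ?thesis by simp
qed

lemma ge1:
  fixes t u :: real
  assumes t: "t \<ge> 0" and u: "u \<ge> 2 * t"
  shows "(phi t u)^3 - (u+1) * phi t u + 2*t = 0 \<and> phi t u \<ge> 1"
proof -
  define s where "s = sqrt ((u+1)/3)"
  have a: "(u+1)/3 \<ge> (2*t+1)/3" using u by simp
  have a0: "(2*t+1)/3 > 0" using t by simp
  have ss: "s^2 = (u+1)/3" unfolding s_def using a a0 by simp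
  have s0: "s > 0" unfolding s_def using a a0 by simp
  have p1: "t^2 \<le> ((2*t+1)/3)^3"
  proof -
    have i1: "(2*t+1)^3 - 27 * t^2 = (t-1)^2 * (8*t+1)" by algebra
    have "(t-1)^2 * (8*t+1) \<ge> 0" using t by simp
    hence "27 * t^2 \<le> (2*t+1)^3" using i1 by linarith
    moreover have "((2*t+1)/3)^3 = (2*t+1)^3 / 27" by (simp add: power_divide)
    ultimately show ?thesis by simp
  qed
  also have "\<dots> \<le> ((u+1)/3)^3" using a a0 by (intro power_mono) auto
  also have "\<dots> = (s^3)^2" unfolding ss[symmetric] by (metis power_mult mult.commute)
  finally have "t^2 \<le> (s^3)^2" .
  hence ts: "t \<le> s^3" by (rule power2_le_imp_le) (use s0 in simp)
  have c: "(phi t u)^3 - (u+1) * phi t u + 2*t = 0 \<and> phi t u \<ge> s"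
    using cubic[of t u] t s0 ts unfolding s_def by blast
  define x where "x = phi t u"
  have cx: "x^3 - (u+1) * x + 2*t = 0" and xs: "x \<ge> s" using c unfolding x_def by auto
  have x0: "x > 0" using xs s0 by simp
  have "x \<ge> 1"
  proof (rule ccontr)
    assume "\<not> x \<ge> 1"
    hence x1: "x < 1" by simp
    have "x^2 \<ge> s^2" using xs s0 by (intro power_mono) auto
    hence u3: "u + 1 \<le> 3 * x^2" using ss by simp
    have e: "x^3 + 2*t = (u+1) * x" using cx by simp
    have "(u+1) * x \<le> 3 * x^2 * x" using u3 x0 by (intro mult_right_mono) auto
    moreover have "3 * x^2 * x = 3 * x^3" by algebra
    ultimately have tx: "t \<le> x^3" using e by linarith
    have "(2*t+1) * x \<le> (u+1) * x" using u x0 by (intro mult_right_mono) auto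
    moreover have "(1-x)*(2*t) - (1-x)*(x*(1+x)) = (x^3+2*t) - (2*t+1)*x" by algebra
    ultimately have "(1 - x) * (x * (1 + x)) \<le> (1 - x) * (2*t)" using e by linarith
    hence "x * (1 + x) \<le> 2*t" using x1 by simp
    with tx have "x * (1 + x) \<le> 2 * x^3" by linarith
    moreover have "2 * x^3 = x * (2 * x^2)" by algebra
    ultimately have "x * (1 + x) \<le> x * (2 * x^2)" by (rule ord_le_eq_trans)
    hence "1 + x \<le> 2 * x^2" using x0 by simp
    moreover have "(2*x+1) * (x - 1) = 2 * x^2 - x - 1" by algebra
    ultimately have "(2*x+1) * (x - 1) \<ge> 0" by linarith
    moreover have "(2*x+1) * (x - 1) < 0" using x0 x1 by (intro mult_pos_neg) auto
    ultimately show False by linarith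
  qed
  thus ?thesis using cx unfolding x_def by simp
qed

lemma lip_step:
  fixes t u v x y :: real
  assumes t: "t \<ge> 0" "t < 1" and x: "x \<ge> 1" and y: "y \<ge> 1"
    and eu: "u + 1 = x^2 + 2*t/x" and ev: "v + 1 = y^2 + 2*t/y"
  shows "\<bar>x^2 - y^2\<bar> * (1 - t) \<le> \<bar>u - v\<bar>"
proof -
  have x0: "x > 0" and y0: "y > 0" using x y by auto
  have "1 * 1 \<le> x * y" using x y by (intro mult_mono) auto
  hence xy1: "x * y \<ge> 1" by simp
  have d: "2*t/x - 2*t/y = -(x-y) * (2*t/(x*y))" using x0 y0 by (simp add: field_simps)
  define K where "K = (x + y) - 2*t/(x*y)"
  have "u - v = (x^2 - y^2) + (2*t/x - 2*t/y)" using eu ev by linarith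
  also have "\<dots> = (x - y) * K"
  proof -
    have g: "\<And>z. (x^2 - y^2) + (-(x-y)*z) = (x-y)*((x+y) - z)" by algebra
    show ?thesis unfolding d K_def by (rule g)
  qed
  finally have uv: "u - v = (x - y) * K" .
  have "2*t/(x*y) \<le> 2*t / 1" using xy1 t by (intro divide_left_mono) auto
  also have "\<dots> \<le> t * (x + y)"
  proof -
    have "t * 2 \<le> t * (x + y)" using x y t by (intro mult_left_mono) auto
    thus ?thesis by simp
  qed
  finally have "2*t/(x*y) \<le> t * (x+y)" .
  hence K: "K \<ge> (x + y) * (1 - t)" unfolding K_def by (simp add: algebra_simps)
  have Kp: "(x + y) * (1 - t) \<ge> 0" using x y t by simp
  have "\<bar>x^2 - y^2\<bar> * (1 - t) = \<bar>x - y\<bar> * ((x + y) * (1 - t))"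
  proof -
    have "x^2 - y^2 = (x - y) * (x + y)" by algebra
    hence "\<bar>x^2 - y^2\<bar> = \<bar>x - y\<bar> * (x + y)" using x y by (simp add: abs_mult)
    thus ?thesis by simp
  qed
  also have "\<dots> \<le> \<bar>x - y\<bar> * K" using K by (intro mult_left_mono) auto
  also have "\<dots> = \<bar>u - v\<bar>" using uv K Kp by (simp add: abs_mult)
  finally show ?thesis .
qed

theorem lemma7:
  fixes t :: real
  assumes "t \<ge> 0"
  shows "strict_mono_on {3 * t powr (2/3) - 1..} (phi t)
       \<and> strict_mono_on {3 * t powr (2/3) - 1..} (\<lambda>u. (phi t u)^2)
       \<and> (t \<le> 1 \<longrightarrow> phi t (2 * t) = 1)
       \<and> (t < 1 \<longrightarrow> (\<exists>L. lipschitz_on L {2 * t..} (\<lambda>u. (phi t u)^2)))"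
proof (intro conjI impI)
  show "strict_mono_on {3 * t powr (2/3) - 1..} (phi t)"
    by (rule strict_mono_onI) (use mono_step[OF assms] in auto)
  show "strict_mono_on {3 * t powr (2/3) - 1..} (\<lambda>u. (phi t u)^2)"
  proof (rule strict_mono_onI)
    fix r s assume "r \<in> {3 * t powr (2/3) - 1..}" "s \<in> {3 * t powr (2/3) - 1..}" "r < s"
    hence "0 \<le> phi t r \<and> phi t r < phi t s" using mono_step[OF assms] by auto
    thus "(phi t r)^2 < (phi t s)^2" by (intro power_strict_mono) auto
  qed
next
  assume t1: "t \<le> 1"
  define x where "x = phi t (2*t)"
  have c: "x^3 - (2*t+1) * x + 2*t = 0" and x1: "x \<ge> 1"
    using ge1[OF assms, of "2*t"] unfolding x_def by (auto simp: add.commute)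
  have "(x - 1) * (x^2 + x - 2*t) = x^3 - (2*t+1) * x + 2*t" by algebra
  hence f: "(x - 1) * (x^2 + x - 2*t) = 0" using c by simp
  show "phi t (2*t) = 1"
  proof (rule ccontr)
    assume "phi t (2*t) \<noteq> 1"
    hence "x > 1" using x1 unfolding x_def by simp
    hence "x^2 > 1" by simp
    moreover have "x^2 + x - 2*t = 0" using f \<open>x > 1\<close> by simp
    ultimately show False using t1 \<open>x > 1\<close> by linarith
  qed
next
  assume t1: "t < 1"
  show "\<exists>L. lipschitz_on L {2 * t..} (\<lambda>u. (phi t u)^2)"
  proof (intro exI lipschitz_onI)
    show "0 \<le> 1 / (1 - t)" using t1 by simp
    fix u v assume u: "u \<in> {2*t..}" and v: "v \<in> {2*t..}"
    define x where "x = phi t u"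
    define y where "y = phi t v"
    have cu: "x^3 - (u+1) * x + 2*t = 0" and x1: "x \<ge> 1"
      using ge1[OF assms, of u] u unfolding x_def by auto
    have cv: "y^3 - (v+1) * y + 2*t = 0" and y1: "y \<ge> 1"
      using ge1[OF assms, of v] v unfolding y_def by auto
    have eu: "u + 1 = x^2 + 2*t/x"
    proof -
      have "(u+1) * x = x^2 * x + 2*t" using cu by (simp add: power2_eq_square power3_eq_cube)
      thus ?thesis using x1 by (simp add: field_simps)
    qed
    have ev: "v + 1 = y^2 + 2*t/y"
    proof -
      have "(v+1) * y = y^2 * y + 2*t" using cv by (simp add: power2_eq_square power3_eq_cube)
      thus ?thesis using y1 by (simp add: field_simps)
    qed
    have "\<bar>x^2 - y^2\<bar> * (1 - t) \<le> \<bar>u - v\<bar>"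
      by (rule lip_step[OF assms t1 x1 y1 eu ev])
    hence "\<bar>x^2 - y^2\<bar> \<le> \<bar>u - v\<bar> / (1 - t)" using t1 by (simp add: field_simps)
    thus "dist ((phi t u)^2) ((phi t v)^2) \<le> 1 / (1 - t) * dist u v"
      unfolding x_def y_def dist_real_def by simp
  qed
qed

end
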